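(* Let $\gamma\in(0,1)$ be a constant. Consider Algorithm MWHVC (described in the context) run in the CONGEST model on a hypergraph $G=(V,E)$ of rank $f$ and maximum degree $\Delta\ge 3$ with nonnegative vertex weights $w$, with parameters $\varepsilon\in(0,1]$, $\beta=\varepsilon/(f+\varepsilon)$ and multiplier $$\alpha=\begin{cases}\left(\frac{\log\Delta}{\log\log\Delta}\right)^{1-\gamma} & \text{if } \frac{f}{\beta}<\left(\frac{\log\Delta}{\log\log\Delta}\right)^{\gamma},\\ 2 & \text{otherwise.}\end{cases}$$ Then the round complexity of the algorithm is $$O\left(\frac{\log\Delta}{\log\log\Delta}+\left(\frac{f^2}{\varepsilon}\right)^{1/\gamma}\cdot\log\log\Delta\right).$$
   Context: Let $G=(V,E)$ be a hypergraph with $n=|V|$: each hyperedge is a nonempty subset of $V$ of size at most $f$ (rank $f$). Vertices have nonnegative weights $w(v)$; weights and degrees are assumed polynomial in $n$. For $v\in V$, $E(v)=\{e\in E: v\in e\}$; $\Delta=\max_v |E(v)|\ge 3$. A hyperedge $e$ is covered by $C\subseteq V$ if $e\cap C\neq\emptyset$. The computation is distributed in synchronous rounds (CONGEST: messages of $O(\log n)$ bits) on the bipartite network with node set $V\cup E$ and a link between $v$ and $e$ iff $v\in e$. Parameters: $\varepsilon\in(0,1]$, $\beta=\varepsilon/(f+\varepsilon)$, and a multiplier $\alpha>1$. Algorithm MWHVC: Initialize $C\gets\emptyset$ and $E'(v)\gets E(v)$ for every $v$. Iteration $0$: every hyperedge $e$ sets $\mathrm{deal}_0(e)=\beta\cdot\min_{v\in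 e} w(v)/|E(v)|$ and $\delta_0(e)=\mathrm{deal}_0(e)$. For $i=1,2,\dots$: (a) every vertex $v\notin C$ (not terminated) checks whether $\sum_{e\in E(v)}\delta_{i-1}(e)\ge(1-\beta)w(v)$; if so, $v$ joins $C$, tells every $e\in E'(v)$ that $e$ is covered, and terminates. (b) Every uncovered hyperedge that receives such a message becomes covered, informs all its vertices, and terminates. (c) Every vertex $v\notin C$ that is told $e$ is covered sets $E'(v)\gets E'(v)\setminus\{e\}$; if $E'(v)=\emptyset$, $v$ terminates without joining $C$. (d) Every vertex $v\notin C$ sends "raise" to all $e\in E'(v)$ if $\sum_{e\in E'(v)}\mathrm{deal}_{i-1}(e)\le(\beta/\alpha)w(v)$, and otherwise sends "stuck" to all $e\in E'(v)$. (e) Every uncovered hyperedge $e$ sets $\mathrm{deal}_i(e)=\mathrm{deal}_{i-1}(e)$ if it received some "stuck" message, and $\mathrm{deal}_i(e)=\alpha\cdot\mathrm{deal}_{i-1}(e)$ otherwise, and $\delta_i(e)=\delta_{i-1}(e)+\mathrm{deal}_i(e)$, sending the new deal to its vertices. A vertex terminates when it is in $C$ or all its hyperedges are covered; a hyperedge terminates when covered. *)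

theory Defs
  imports Complex_Main
begin

definition inc :: "'a set set \<Rightarrow> 'a \<Rightarrow> 'a set set" where
  "inc E v = {e \<in> E. v \<in> e}"

definition maxdeg :: "'a set \<Rightarrow> 'a set set \<Rightarrow> nat" where
  "maxdeg V E = Max ((\<lambda>v. card (inc E v)) ` V)"

text \<open>State of algorithm MWHVC after an iteration: the cover C, the set of covered
  hyperedges, the vertices that terminated without joining C, and the current
  deal and delta values of the hyperedges.\<close>
record 'a mwstate =
  inC :: "'a set"
  covd :: "'a set set"
  dead :: "'a set"
  deal :: "'a set \<Rightarrow> real"
  dlt :: "'a set \<Rightarrow> real"

definition mw_init :: "'a set set \<Rightarrow> ('a \<Rightarrow> real) \<Rightarrow> real \<Rightarrow> 'a mwstate" where
  "mw_init E w \<beta> =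
     (let d0 = (\<lambda>e. \<beta> * Min ((\<lambda>v. w v / real (card (inc E v))) ` e))
      in \<lparr>inC = {}, covd = {}, dead = {}, deal = d0, dlt = d0\<rparr>)"

text \<open>Iteration i >= 1, steps (a)--(e). The set E'(v) of a non-terminated vertex v is
  E(v) minus the hyperedges covered so far.\<close>
definition mw_step :: "'a set \<Rightarrow> 'a set set \<Rightarrow> ('a \<Rightarrow> real) \<Rightarrow> real \<Rightarrow> real
      \<Rightarrow> 'a mwstate \<Rightarrow> 'a mwstate" where
  "mw_step V E w \<beta> \<alpha> s =
     (let J = {v \<in> V. v \<notin> inC s \<and> v \<notin> dead s \<and>
                 (\<Sum>e\<in>inc E v. dlt s e) \<ge> (1 - \<beta>) * w v};
          C' = inC s \<union> J;
          cv' = covd s \<union> {e \<in> E. e \<inter> J \<noteq> {}};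
          dd' = dead s \<union> {v \<in> V. v \<notin> C' \<and> inc E v - cv' = {}};
          raise = (\<lambda>v. (\<Sum>e\<in>inc E v - cv'. deal s e) \<le> (\<beta> / \<alpha>) * w v);
          dl' = (\<lambda>e. if e \<in> E \<and> e \<notin> cv'
                      then (if (\<exists>v\<in>e. \<not> raise v) then deal s e else \<alpha> * deal s e)
                      else deal s e);
          dt' = (\<lambda>e. if e \<in> E \<and> e \<notin> cv' then dlt s e + dl' e else dlt s e)
      in \<lparr>inC = C', covd = cv', dead = dd', deal = dl', dlt = dt'\<rparr>)"

definition mw_state :: "'a set \<Rightarrow> 'a set set \<Rightarrow> ('a \<Rightarrow> real) \<Rightarrow> real \<Rightarrow> real
      \<Rightarrow> nat \<Rightarrow> 'a mwstate" where
  "mw_state V E w \<beta> \<alpha> i = (mw_step V E w \<beta> \<alpha> ^^ i) (mw_init E w \<beta>)"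

text \<open>All vertices have terminated (then all hyperedges are covered as well).\<close>
definition mw_terminated :: "'a set \<Rightarrow> 'a mwstate \<Rightarrow> bool" where
  "mw_terminated V s \<longleftrightarrow> V \<subseteq> inC s \<union> dead s"

definition mw_alpha :: "real \<Rightarrow> nat \<Rightarrow> real \<Rightarrow> nat \<Rightarrow> real" where
  "mw_alpha \<gamma> f \<beta> \<Delta> =
     (let L = log 2 \<Delta> / log 2 (log 2 \<Delta>)
      in if real f / \<beta> < L powr \<gamma> then L powr (1 - \<gamma>) else 2)"

definition hypergraph :: "'a set \<Rightarrow> 'a set set \<Rightarrow> nat \<Rightarrow> bool" where
  "hypergraph V E f \<longleftrightarrow> finite V \<and> (\<forall>e\<in>E. e \<noteq> {} \<and> e \<subseteq> V \<and> card e \<le> f)"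

end

theory Submission
  imports Defs
begin

locale mwc =
  fixes V :: "'a set" and E :: "'a set set" and f :: nat and w :: "'a \<Rightarrow> real"
    and \<beta> \<alpha> :: real
  assumes hg: "hypergraph V E f" and wnn: "\<forall>v\<in>V. w v \<ge> 0"
    and bpos: "0 < \<beta>" and ble: "\<beta> \<le> 1" and agt: "1 < \<alpha>"
begin

abbreviation "s i \<equiv> mw_state V E w \<beta> \<alpha> i"

definition "Jset i = {v\<in>V. v\<notin>inC (s i) \<and> v\<notin>dead (s i) \<and> (\<Sum>e\<in>inc E v. dlt (s i) e) \<ge> (1-\<beta>) * w v}"
definition "rs i v \<longleftrightarrow> (\<Sum>e\<in>inc E v - covd (s (Suc i)). deal (s i) e) \<le> \<beta> / \<alpha> * w v"

lemma s_Suc: "s (Suc i) = mw_step V E w \<beta> \<alpha> (s i)"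
  by (simp add: mw_state_def)

lemma inC_Suc: "inC (s (Suc i)) = inC (s i) \<union> Jset i"
  by (simp add: s_Suc mw_step_def Let_def Jset_def)
lemma covd_Suc: "covd (s (Suc i)) = covd (s i) \<union> {e\<in>E. e \<inter> Jset i \<noteq> {}}"
  by (simp add: s_Suc mw_step_def Let_def Jset_def)
lemma dead_Suc: "dead (s (Suc i)) = dead (s i) \<union> {v\<in>V. v \<notin> inC (s (Suc i)) \<and> inc E v - covd (s (Suc i)) = {}}"
  by (simp add: s_Suc mw_step_def Let_def Jset_def)
lemma deal_Suc: "deal (s (Suc i)) e = (if e\<in>E \<and> e\<notin>covd (s (Suc i)) then (if \<exists>v\<in>e. \<not> rs i v then deal (s i) e else \<alpha> * deal (s i) e) else deal (s i) e)"
  unfolding rs_def covd_Suc by (simp add: s_Suc mw_step_def Let_def Jset_def)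
lemma dlt_Suc: "dlt (s (Suc i)) e = (if e\<in>E \<and> e\<notin>covd (s (Suc i)) then dlt (s i) e + deal (s (Suc i)) e else dlt (s i) e)"
  unfolding deal_Suc rs_def covd_Suc by (simp add: s_Suc mw_step_def Let_def Jset_def)

lemma s0: "inC (s 0) = {}" "covd (s 0) = {}" "dead (s 0) = {}"
  "deal (s 0) = (\<lambda>e. \<beta> * Min ((\<lambda>v. w v / real (card (inc E v))) ` e))"
  "dlt (s 0) = (\<lambda>e. \<beta> * Min ((\<lambda>v. w v / real (card (inc E v))) ` e))"
  by (simp_all add: mw_state_def mw_init_def Let_def)

lemma finV: "finite V" using hg by (simp add: hypergraph_def)
lemma edge: "e \<in> E \<Longrightarrow> e \<noteq> {} \<and> e \<subseteq> V \<and> card e \<le> f" using hg by (simp add: hypergraph_def)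
lemma finE: "finite E"
proof -
  have "E \<subseteq> Pow V" using edge by blast
  then show ?thesis using finite_subset[of E "Pow V"] finV by simp
qed
lemma fin_inc: "finite (inc E v)" using finE by (simp add: inc_def)
lemma fin_e: "e \<in> E \<Longrightarrow> finite e" using edge finV finite_subset by metis

lemma mono1: "covd (s i) \<subseteq> covd (s (Suc i))" "inC (s i) \<subseteq> inC (s (Suc i))" "dead (s i) \<subseteq> dead (s (Suc i))"
  by (auto simp: covd_Suc inC_Suc dead_Suc[of i])

lemma mono: "i \<le> j \<Longrightarrow> covd (s i) \<subseteq> covd (s j) \<and> inC (s i) \<subseteq> inC (s j) \<and> dead (s i) \<subseteq> dead (s j)"
proof (induction j rule: dec_induct)
  case base then show ?case by simp
next
  case (step n) then show ?case using mono1[of n] by blast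
qed

lemma inv: "v \<in> inC (s i) \<union> dead (s i) \<Longrightarrow> inc E v \<subseteq> covd (s i)"
proof (induction i)
  case 0 then show ?case by (simp add: s0)
next
  case (Suc i)
  show ?case
  proof
    fix e assume e: "e \<in> inc E v"
    consider "v \<in> inC (s i) \<union> dead (s i)" | "v \<in> Jset i" | "v \<notin> inC (s (Suc i))" "inc E v - covd (s (Suc i)) = {}"
      using Suc.prems inC_Suc[of i] dead_Suc[of i] by blast
    then show "e \<in> covd (s (Suc i))"
    proof cases
      case 1 then show ?thesis using Suc.IH e mono1[of i] by blast
    next
      case 2 then show ?thesis using e by (auto simp: covd_Suc inc_def)
    next
      case 3 then show ?thesis using e by blast
    qed
  qed
qed

lemma deal0_nn: "e \<in> E \<Longrightarrow> deal (s 0) e \<ge> 0"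
proof -
  assume e: "e \<in> E"
  have "Min ((\<lambda>v. w v / real (card (inc E v))) ` e) \<ge> 0"
    using e edge[OF e] fin_e[OF e] wnn by (subst Min_ge_iff) auto
  then show ?thesis using bpos by (simp add: s0)
qed

lemma deal_nn: "e \<in> E \<Longrightarrow> deal (s i) e \<ge> 0"
  by (induction i) (use deal0_nn agt in \<open>auto simp: deal_Suc\<close>)

lemma dlt_nn: "e \<in> E \<Longrightarrow> dlt (s i) e \<ge> 0"
  by (induction i) (use deal0_nn deal_nn in \<open>auto simp: dlt_Suc s0\<close>)

lemma dlt_mono: "e \<in> E \<Longrightarrow> dlt (s i) e \<le> dlt (s (Suc i)) e"
  using deal_nn[of e "Suc i"] by (simp add: dlt_Suc)

definition "alive v i \<longleftrightarrow> v \<notin> inC (s i) \<and> v \<notin> dead (s i)"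
definition "st v i \<longleftrightarrow> alive v (Suc i) \<and> \<not> rs i v"

lemma alive_anti: "i \<le> j \<Longrightarrow> alive v j \<Longrightarrow> alive v i"
  using mono unfolding alive_def by blast

lemma stuck_gain:
  assumes "v \<in> V" "st v i"
  shows "(\<Sum>e\<in>inc E v. dlt (s (Suc i)) e) \<ge> (\<Sum>e\<in>inc E v. dlt (s i) e) + \<beta> / \<alpha> * w v"
proof -
  let ?A = "inc E v - covd (s (Suc i))"
  have nr: "\<not> rs i v" using assms st_def by blast
  have A: "?A \<subseteq> inc E v" by blast
  have eq: "\<And>e. e \<in> ?A \<Longrightarrow> dlt (s (Suc i)) e = dlt (s i) e + deal (s i) e"
    using nr by (auto simp: dlt_Suc deal_Suc inc_def)
  have s1: "(\<Sum>e\<in>inc E v. dlt (s (Suc i)) e) = (\<Sum>e\<in>?A. dlt (s (Suc i)) e) + (\<Sum>e\<in>inc E v - ?A. dlt (s (Suc i)) e)"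
    using sum.subset_diff[OF A fin_inc, of "dlt (s (Suc i))"] by linarith
  have s2: "(\<Sum>e\<in>?A. dlt (s (Suc i)) e) = (\<Sum>e\<in>?A. dlt (s i) e) + (\<Sum>e\<in>?A. deal (s i) e)"
    using eq by (simp add: sum.distrib)
  have s3: "(\<Sum>e\<in>inc E v - ?A. dlt (s (Suc i)) e) \<ge> (\<Sum>e\<in>inc E v - ?A. dlt (s i) e)"
    by (rule sum_mono) (use dlt_mono in \<open>auto simp: inc_def\<close>)
  have s4: "(\<Sum>e\<in>?A. dlt (s i) e) + (\<Sum>e\<in>inc E v - ?A. dlt (s i) e) = (\<Sum>e\<in>inc E v. dlt (s i) e)"
    using sum.subset_diff[OF A fin_inc, of "dlt (s i)"] by linarith
  have s5: "(\<Sum>e\<in>?A. deal (s i) e) > \<beta> / \<alpha> * w v" using nr by (simp add: rs_def)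
  from s1 s2 s3 s4 s5 show ?thesis by linarith
qed

lemma dlt_sum_mono: "(\<Sum>e\<in>inc E v. dlt (s i) e) \<le> (\<Sum>e\<in>inc E v. dlt (s (Suc i)) e)"
  by (rule sum_mono) (use dlt_mono in \<open>auto simp: inc_def\<close>)

lemma stuck_count:
  assumes "v \<in> V"
  shows "real (card {i. i<m \<and> st v i}) * (\<beta> / \<alpha> * w v) \<le> (\<Sum>e\<in>inc E v. dlt (s m) e)"
proof (induction m)
  case 0
  have "0 \<le> (\<Sum>e\<in>inc E v. dlt (s 0) e)" by (rule sum_nonneg) (use dlt_nn in \<open>auto simp: inc_def\<close>)
  then show ?case by simp
next
  case (Suc m)
  show ?case
  proof (cases "st v m")
    case True
    have "{i. i<Suc m \<and> st v i} = insert m {i. i<m \<and> st v i}" using True by auto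
    then have "card {i. i<Suc m \<and> st v i} = Suc (card {i. i<m \<and> st v i})" by simp
    then show ?thesis using Suc.IH stuck_gain[OF assms True] by (simp add: algebra_simps)
  next
    case False
    have "{i. i<Suc m \<and> st v i} = {i. i<m \<and> st v i}" using False less_Suc_eq by auto
    then show ?thesis using Suc.IH dlt_sum_mono[where v=v and i=m] by simp
  qed
qed

lemma alive_lt: "v \<in> V \<Longrightarrow> alive v (Suc m) \<Longrightarrow> (\<Sum>e\<in>inc E v. dlt (s m) e) < (1-\<beta>) * w v"
  using inC_Suc[of m] mono1[of m] unfolding alive_def Jset_def by auto

lemma stuck_bound:
  assumes "v \<in> V"
  shows "real (card {i. i<m \<and> st v i}) \<le> \<alpha> / \<beta> + 1"
proof (cases "{i. i<m \<and> st v i} = {}")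
  case True
  have "\<alpha>/\<beta> + 1 \<ge> 0" using agt bpos by simp
  then show ?thesis by (subst True) simp
next
  case False
  let ?A = "{i. i<m \<and> st v i}"
  have finA: "finite ?A" by simp
  define j where "j = Max ?A"
  have jA: "j \<in> ?A" using Max_in[OF finA False] j_def by simp
  have sub: "?A \<subseteq> insert j {i. i<j \<and> st v i}"
  proof
    fix x assume x: "x \<in> ?A"
    then have "x \<le> j" using Max_ge[OF finA x] j_def by simp
    then show "x \<in> insert j {i. i<j \<and> st v i}" using x by auto
  qed
  have "card ?A \<le> card (insert j {i. i<j \<and> st v i})" by (rule card_mono) (use sub in auto)
  also have "\<dots> \<le> Suc (card {i. i<j \<and> st v i})" by (simp add: card_insert_le_m1)
  finally have c1: "real (card ?A) \<le> real (card {i. i<j \<and> st v i}) + 1" by simp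
  have al: "alive v (Suc j)" using jA st_def by blast
  have lt: "real (card {i. i<j \<and> st v i}) * (\<beta> / \<alpha> * w v) < (1-\<beta>) * w v"
    using stuck_count[OF assms, of j] alive_lt[OF assms al] by linarith
  have wv: "w v \<ge> 0" using wnn assms by blast
  have wp: "w v > 0"
  proof (rule ccontr)
    assume "\<not> w v > 0"
    then have "w v = 0" using wv by simp
    then show False using lt by simp
  qed
  let ?k = "real (card {i. i<j \<and> st v i})"
  have "?k * (\<beta> / \<alpha>) < (1-\<beta>)" using \<open>?k * (\<beta> / \<alpha> * w v) < (1-\<beta>) * w v\<close> wp
    by (metis mult.assoc mult_less_cancel_right_pos)
  then have "?k * \<beta> < (1 - \<beta>) * \<alpha>" using agt by (simp add: field_simps)
  also have "\<dots> \<le> \<alpha>" using bpos agt by simp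
  finally have "?k < \<alpha> / \<beta>" using bpos by (simp add: field_simps)
  then show ?thesis using c1 by linarith
qed

definition "rd e i \<longleftrightarrow> e \<notin> covd (s (Suc i)) \<and> (\<forall>v\<in>e. rs i v)"

lemma deal_pow: "e \<in> E \<Longrightarrow> deal (s m) e = \<alpha> ^ card {i. i<m \<and> rd e i} * deal (s 0) e"
proof (induction m)
  case 0 then show ?case by simp
next
  case (Suc m)
  show ?case
  proof (cases "rd e m")
    case True
    have "{i. i<Suc m \<and> rd e i} = insert m {i. i<m \<and> rd e i}" using True by auto
    then have "card {i. i<Suc m \<and> rd e i} = Suc (card {i. i<m \<and> rd e i})" by simp
    moreover have "deal (s (Suc m)) e = \<alpha> * deal (s m) e" using True Suc.prems by (simp add: deal_Suc rd_def)
    ultimately show ?thesis using Suc.IH Suc.prems by simp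
  next
    case False
    have "{i. i<Suc m \<and> rd e i} = {i. i<m \<and> rd e i}" using False less_Suc_eq by auto
    moreover have "deal (s (Suc m)) e = deal (s m) e" using False Suc.prems by (auto simp: deal_Suc rd_def)
    ultimately show ?thesis using Suc.IH Suc.prems by simp
  qed
qed

lemma deg_le: "u \<in> V \<Longrightarrow> card (inc E u) \<le> maxdeg V E"
  unfolding maxdeg_def by (rule Max_ge) (use finV in auto)

lemma wzero_cov:
  assumes "e \<in> E" "u \<in> e" "w u = 0"
  shows "e \<in> covd (s (Suc j))"
proof -
  have uV: "u \<in> V" using edge assms by blast
  have "0 \<le> (\<Sum>e\<in>inc E u. dlt (s 0) e)" by (rule sum_nonneg) (use dlt_nn in \<open>auto simp: inc_def\<close>)
  then have "u \<in> Jset 0" using uV assms by (simp add: Jset_def s0)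
  then have "e \<in> covd (s (Suc 0))" using assms by (auto simp: covd_Suc)
  then show ?thesis using mono[of "Suc 0" "Suc j"] by auto
qed

lemma rd_bound:
  assumes eE: "e \<in> E" and r: "rd e j"
  shows "\<alpha> ^ Suc (card {i. i<j \<and> rd e i}) \<le> real (maxdeg V E)"
proof -
  let ?g = "\<lambda>v. w v / real (card (inc E v))"
  have fe: "finite e" and ne: "e \<noteq> {}" and eV: "e \<subseteq> V" using fin_e[OF eE] edge[OF eE] by auto
  have "Min (?g ` e) \<in> ?g ` e" using fe ne by (intro Min_in) auto
  then obtain u where ue: "u \<in> e" and um: "Min (?g ` e) = ?g u" by auto
  have uV: "u \<in> V" using ue eV by blast
  have einc: "e \<in> inc E u" using ue eE by (simp add: inc_def)
  have cpos: "card (inc E u) \<ge> 1" using einc fin_inc[of u]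
    by (metis One_nat_def Suc_leI card_gt_0_iff empty_iff)
  have cD: "real (card (inc E u)) \<le> real (maxdeg V E)" using deg_le[OF uV] by simp
  have ncov: "e \<notin> covd (s (Suc j))" using r rd_def by blast
  have wu: "w u > 0"
  proof (rule ccontr)
    assume "\<not> w u > 0"
    then have "w u = 0" using wnn uV by force
    then show False using wzero_cov[OF eE ue] ncov by blast
  qed
  have rsu: "rs j u" using r ue rd_def by blast
  let ?B = "inc E u - covd (s (Suc j))"
  have eB: "e \<in> ?B" using einc ncov by blast
  have "deal (s j) e \<le> (\<Sum>e\<in>?B. deal (s j) e)"
    by (rule member_le_sum) (use eB deal_nn fin_inc in \<open>auto simp: inc_def\<close>)
  also have "\<dots> \<le> \<beta> / \<alpha> * w u" using rsu rs_def by blast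
  finally have le1: "deal (s j) e \<le> \<beta> / \<alpha> * w u" .
  let ?k = "card {i. i<j \<and> rd e i}"
  let ?c = "real (card (inc E u))"
  have "deal (s j) e = \<alpha> ^ ?k * (\<beta> * (w u / ?c))" using deal_pow[OF eE] um by (simp add: s0)
  with le1 have "\<alpha> ^ ?k * (\<beta> * (w u / ?c)) \<le> \<beta> / \<alpha> * w u" by simp
  then have "\<alpha> ^ ?k * \<beta> * w u * \<alpha> \<le> \<beta> * w u * ?c" using agt cpos
    by (simp add: field_simps)
  then have "(\<alpha> ^ ?k * \<alpha>) * (\<beta> * w u) \<le> ?c * (\<beta> * w u)" by (simp add: algebra_simps)
  then have "\<alpha> ^ ?k * \<alpha> \<le> ?c" using bpos wu by (simp add: mult_le_cancel_right)
  then show ?thesis using cD by (simp add: mult.commute)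
qed

lemma rd_count:
  assumes eE: "e \<in> E"
  shows "\<alpha> ^ card {i. i<m \<and> rd e i} \<le> real (maxdeg V E)"
proof (cases "{i. i<m \<and> rd e i} = {}")
  case True
  obtain u where ue: "u \<in> e" using edge[OF eE] by blast
  have uV: "u \<in> V" using ue edge[OF eE] by blast
  have einc: "e \<in> inc E u" using ue eE by (simp add: inc_def)
  have "card (inc E u) \<ge> 1" using einc fin_inc[of u]
    by (metis One_nat_def Suc_leI card_gt_0_iff empty_iff)
  then have "1 \<le> real (maxdeg V E)" using deg_le[OF uV] by linarith
  then show ?thesis by (subst True) simp
next
  case False
  let ?A = "{i. i<m \<and> rd e i}"
  have finA: "finite ?A" by simp
  define j where "j = Max ?A"
  have jA: "j \<in> ?A" using Max_in[OF finA False] j_def by simp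
  have sub: "?A \<subseteq> insert j {i. i<j \<and> rd e i}"
  proof
    fix x assume x: "x \<in> ?A"
    then have "x \<le> j" using Max_ge[OF finA x] j_def by simp
    then show "x \<in> insert j {i. i<j \<and> rd e i}" using x by auto
  qed
  have "card ?A \<le> card (insert j {i. i<j \<and> rd e i})" by (rule card_mono) (use sub in auto)
  also have "\<dots> \<le> Suc (card {i. i<j \<and> rd e i})" by (simp add: card_insert_le_m1)
  finally have c1: "card ?A \<le> Suc (card {i. i<j \<and> rd e i})" .
  have "\<alpha> ^ card ?A \<le> \<alpha> ^ Suc (card {i. i<j \<and> rd e i})"
    using c1 agt by (intro power_increasing) auto
  also have "\<dots> \<le> real (maxdeg V E)" using rd_bound[OF eE] jA by blast
  finally show ?thesis .
qed

lemma rd_log: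
  assumes eE: "e \<in> E"
  shows "real (card {i. i<m \<and> rd e i}) \<le> ln (real (maxdeg V E)) / ln \<alpha>"
proof -
  have p: "0 < \<alpha> ^ card {i. i<m \<and> rd e i}" using agt by simp
  have "ln (\<alpha> ^ card {i. i<m \<and> rd e i}) \<le> ln (real (maxdeg V E))"
    using rd_count[OF eE, of m] p by (subst ln_le_cancel_iff) auto
  then have "real (card {i. i<m \<and> rd e i}) * ln \<alpha> \<le> ln (real (maxdeg V E))"
    using agt by (simp add: ln_realpow)
  then show ?thesis using agt by (simp add: field_simps)
qed

lemma edge_life:
  assumes eE: "e \<in> E" and nc: "e \<notin> covd (s m)"
  shows "real m \<le> ln (real (maxdeg V E)) / ln \<alpha> + real f * (\<alpha> / \<beta> + 1)"
proof -
  let ?R = "{i. i<m \<and> rd e i}"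
  let ?S = "\<lambda>v. {i. i<m \<and> st v i}"
  have eV: "e \<subseteq> V" and ce: "card e \<le> f" and fe: "finite e" using edge[OF eE] fin_e[OF eE] by auto
  have sub: "{..<m} \<subseteq> ?R \<union> (\<Union>v\<in>e. ?S v)"
  proof
    fix i assume "i \<in> {..<m}"
    then have im: "i < m" by simp
    have nc': "e \<notin> covd (s (Suc i))" using nc mono[of "Suc i" m] im by auto
    show "i \<in> ?R \<union> (\<Union>v\<in>e. ?S v)"
    proof (cases "\<forall>v\<in>e. rs i v")
      case True then show ?thesis using im nc' by (simp add: rd_def)
    next
      case False
      then obtain v where ve: "v \<in> e" and nr: "\<not> rs i v" by blast
      have "e \<in> inc E v" using ve eE by (simp add: inc_def)
      then have "alive v (Suc i)" using inv[of v "Suc i"] nc' unfolding alive_def by blast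
      then show ?thesis using ve nr im by (auto simp: st_def)
    qed
  qed
  have "m = card {..<m}" by simp
  also have "\<dots> \<le> card (?R \<union> (\<Union>v\<in>e. ?S v))" by (rule card_mono) (use sub fe in auto)
  also have "\<dots> \<le> card ?R + card (\<Union>v\<in>e. ?S v)" by (rule card_Un_le)
  also have "card (\<Union>v\<in>e. ?S v) \<le> (\<Sum>v\<in>e. card (?S v))" by (rule card_UN_le[OF fe])
  finally have "real m \<le> real (card ?R) + real (\<Sum>v\<in>e. card (?S v))" by linarith
  also have "real (\<Sum>v\<in>e. card (?S v)) = (\<Sum>v\<in>e. real (card (?S v)))" by simp
  also have "\<dots> \<le> (\<Sum>v\<in>e. \<alpha> / \<beta> + 1)" by (rule sum_mono) (use stuck_bound eV in blast)
  also have "\<dots> = real (card e) * (\<alpha> / \<beta> + 1)" by simp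
  also have "\<dots> \<le> real f * (\<alpha> / \<beta> + 1)" using ce agt bpos by (intro mult_right_mono) auto
  finally show ?thesis using rd_log[OF eE, of m] by linarith
qed

lemma terminates:
  assumes "real (Suc m) > ln (real (maxdeg V E)) / ln \<alpha> + real f * (\<alpha> / \<beta> + 1)"
  shows "mw_terminated V (s (Suc m))"
  unfolding mw_terminated_def
proof
  fix v assume vV: "v \<in> V"
  show "v \<in> inC (s (Suc m)) \<union> dead (s (Suc m))"
  proof (rule ccontr)
    assume "v \<notin> inC (s (Suc m)) \<union> dead (s (Suc m))"
    then have "inc E v - covd (s (Suc m)) \<noteq> {}" using dead_Suc[of m] vV by blast
    then obtain e where "e \<in> E" "e \<notin> covd (s (Suc m))" by (auto simp: inc_def)
    then show False using edge_life assms by fastforce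
  qed
qed

end

lemma ln2_ge: "ln (2::real) \<ge> 1/2"
proof -
  have "ln (1/2::real) \<le> 1/2 - 1" by (rule ln_le_minus_one) simp
  then show ?thesis by (simp add: ln_div)
qed

lemma exp_m1_le: "exp (-1::real) \<le> 9/20"
proof -
  have "(3/2::real) \<le> exp (1/2)" using exp_ge_add_one_self[of "1/2::real"] by simp
  then have "(3/2::real) * (3/2) \<le> exp (1/2) * exp (1/2)" by (intro mult_mono) auto
  also have "exp (1/2::real) * exp (1/2) = exp 1" by (simp flip: exp_add)
  finally have "(9/4::real) \<le> exp 1" by simp
  then have "1 / exp (1::real) \<le> 1 / (9/4)" by (intro divide_left_mono) auto
  then show ?thesis by (simp add: exp_minus field_simps)
qed

lemma log_le_pow: assumes "(x::real) > 0" shows "log 2 x \<le> x powr (9/10)"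
proof -
  define t :: real where "t = 9/10 * ln 2"
  have t: "t \<ge> 9/20" using ln2_ge by (simp add: t_def)
  have tpos: "t > 0" using t by simp
  have lt: "ln t \<ge> -1"
  proof -
    have "exp (-1) \<le> t" using exp_m1_le t by linarith
    then have "ln (exp (-1)) \<le> ln t" using tpos by (subst ln_le_cancel_iff) auto
    then show ?thesis by simp
  qed
  have yp: "t * x powr (9/10) > 0" using tpos assms by simp
  have "ln (t * x powr (9/10)) \<le> t * x powr (9/10) - 1" by (rule ln_le_minus_one[OF yp])
  moreover have "ln (t * x powr (9/10)) = ln t + 9/10 * ln x" using tpos assms by (simp add: ln_mult ln_powr)
  ultimately have "9/10 * ln x \<le> 9/10 * ln 2 * x powr (9/10)" using lt by (simp add: t_def)
  then have "ln x \<le> ln 2 * x powr (9/10)" by simp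
  then show ?thesis by (simp add: log_def field_simps)
qed


lemma arith:
  fixes \<gamma> \<epsilon> D :: real and f :: nat
  assumes g0: "0<\<gamma>" and g1: "\<gamma><1" and D: "D \<ge> 3" and e0: "0<\<epsilon>" and e1: "\<epsilon>\<le>1"
  defines "x \<equiv> log 2 D"
  defines "ll \<equiv> log 2 x"
  defines "L \<equiv> x / ll"
  defines "\<beta> \<equiv> \<epsilon>/(real f + \<epsilon>)"
  defines "\<alpha> \<equiv> (if real f / \<beta> < L powr \<gamma> then L powr (1-\<gamma>) else 2)"
  defines "P \<equiv> (real f ^ 2/\<epsilon>) powr (1/\<gamma>)"
  shows "1 < \<alpha> \<and> ln D / ln \<alpha> + real f * (\<alpha>/\<beta> + 1) + 2 \<le> (10/(1-\<gamma>) + 18 + 2 powr (1/\<gamma>)) * (L + P * ll)"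
proof -
  have s2: "sqrt 2 < (3/2::real)"
  proof -
    have "sqrt 2 < sqrt (9/4::real)" by (subst real_sqrt_less_iff) simp
    also have "sqrt (9/4::real) = 3/2" by (simp add: real_sqrt_divide)
    finally show ?thesis .
  qed
  have p32: "(2::real) powr (3/2) = 2 * sqrt 2"
  proof -
    have "(2::real) powr (3/2) = 2 powr (1 + 1/2)" by simp
    also have "\<dots> = 2 * 2 powr (1/2)" by (subst powr_add) simp
    finally show ?thesis by (simp add: powr_half_sqrt)
  qed
  have x32: "x > 3/2" unfolding x_def using D p32 s2 by (subst less_log_iff) auto
  have ll2: "ll > 1/2" unfolding ll_def using x32 s2 by (subst less_log_iff) (auto simp: powr_half_sqrt)
  have x1: "x > 1" using x32 by simp
  have lnx: "ln x > 0" using x1 by simp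
  have Lg: "ll \<le> x powr (9/10)" unfolding ll_def using log_le_pow x1 by simp
  have llpos: "ll > 0" using ll2 by simp
  have "x powr (1/10) = x powr (1 - 9/10)" by simp
  also have "\<dots> = x powr 1 / x powr (9/10)" by (rule powr_diff)
  also have "\<dots> = x / x powr (9/10)" using x1 by simp
  also have "\<dots> \<le> x / ll" using x1 llpos Lg by (intro divide_left_mono) auto
  finally have Lx: "x powr (1/10) \<le> L" unfolding L_def .
  have "1 < x powr (1/10)" using x1 by simp
  then have L1: "L > 1" using Lx by simp
  have lnL: "ln x / 10 \<le> ln L"
  proof -
    have "ln (x powr (1/10)) \<le> ln L" using Lx x1 L1 by (subst ln_le_cancel_iff) auto
    then show ?thesis using x1 by (simp add: ln_powr)
  qed
  have lnD: "ln D = L * ln x"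
  proof -
    have h1: "ll = ln x / ln 2" unfolding ll_def log_def by simp
    have h2: "ln D = x * ln 2" unfolding x_def log_def by simp
    have "L * ln x = x / (ln x / ln 2) * ln x" unfolding L_def h1 by simp
    also have "\<dots> = x * ln 2" using lnx by (simp add: field_simps)
    finally show ?thesis using h2 by simp
  qed
  have b0: "\<beta> > 0" using e0 by (simp add: \<beta>_def)
  have b1: "\<beta> \<le> 1" using e0 by (simp add: \<beta>_def)
  have fb: "real f \<le> real f / \<beta>" using b0 b1 by (simp add: field_simps) (metis mult_left_le_one_le of_nat_0_le_iff less_imp_le)
  have Pll: "P * ll \<ge> 0" using llpos by (simp add: P_def)
  define K where "K = 10/(1-\<gamma>) + 18 + 2 powr (1/\<gamma>)"
  have Kge: "10/(1-\<gamma>) + 4 \<le> K" "2 powr (1/\<gamma>) + 12 \<le> K" "2 \<le> K" using g1 by (auto simp: K_def)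
  show ?thesis
  proof (cases "real f / \<beta> < L powr \<gamma>")
    case True
    then have a: "\<alpha> = L powr (1-\<gamma>)" by (simp add: \<alpha>_def)
    have a1: "\<alpha> > 1" using a L1 g1 by simp
    have lna: "ln \<alpha> = (1-\<gamma>) * ln L" using a L1 by (simp add: ln_powr)
    have lnLp: "ln L > 0" using L1 by simp
    have t1: "ln D / ln \<alpha> \<le> 10 * L / (1-\<gamma>)"
    proof -
      have "ln D = L * ln x" by (rule lnD)
      also have "\<dots> \<le> L * (10 * ln L)" using lnL L1 by (intro mult_left_mono) auto
      also have "L * (10 * ln L) = 10 * L / (1-\<gamma>) * ((1-\<gamma>) * ln L)" using g1 by (simp add: field_simps)
      finally have "ln D \<le> 10 * L / (1-\<gamma>) * ln \<alpha>" unfolding lna .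
      then show ?thesis using a1 by (simp add: pos_divide_le_eq)
    qed
    have Lg1: "L powr \<gamma> \<le> L" using L1 g1 powr_mono[of \<gamma> 1 L] by simp
    have t2: "real f / \<beta> * \<alpha> \<le> L"
    proof -
      have "real f / \<beta> * \<alpha> \<le> L powr \<gamma> * L powr (1-\<gamma>)" unfolding a[symmetric] using True a1 by (intro mult_right_mono) auto
      also have "\<dots> = L" using L1 by (simp flip: powr_add)
      finally show ?thesis .
    qed
    have "real f * (\<alpha>/\<beta> + 1) = real f / \<beta> * \<alpha> + real f" by (simp add: field_simps)
    also have "\<dots> \<le> 2 * L" using t2 fb True Lg1 by linarith
    finally have "ln D / ln \<alpha> + real f * (\<alpha>/\<beta> + 1) + 2 \<le> (10/(1-\<gamma>) + 4) * L" using t1 L1 by (simp add: field_simps)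
    also have "\<dots> \<le> K * L" using Kge L1 by (intro mult_right_mono) auto
    also have "\<dots> \<le> K * (L + P * ll)" using Pll Kge by (intro mult_left_mono) auto
    finally show ?thesis using a1 K_def by simp
  next
    case False
    then have a: "\<alpha> = 2" by (simp add: \<alpha>_def)
    have Lgp: "L powr \<gamma> > 0" using L1 by simp
    have Lle: "L powr \<gamma> \<le> real f / \<beta>" using False by simp
    then have "real f > 0" using Lgp b0 by (cases "f = 0") auto
    then have f1: "real f \<ge> 1" by simp
    define Q where "Q = real f ^ 2 / \<epsilon>"
    have "real f ^ 2 \<ge> 1" using f1 by (simp add: one_le_power)
    then have Q1: "Q \<ge> 1" using e0 e1 unfolding Q_def by (simp add: pos_le_divide_eq)
    have fbQ: "real f / \<beta> \<le> 2 * Q"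
    proof -
      have "real f / \<beta> = real f * (real f + \<epsilon>) / \<epsilon>" using e0 f1 by (simp add: \<beta>_def field_simps)
      also have "\<dots> \<le> real f * (2 * real f) / \<epsilon>" using e0 e1 f1 by (intro divide_right_mono mult_left_mono) auto
      also have "\<dots> = 2 * Q" by (simp add: Q_def power2_eq_square)
      finally show ?thesis .
    qed
    have P: "P = Q powr (1/\<gamma>)" by (simp add: P_def Q_def)
    have LP: "L \<le> 2 powr (1/\<gamma>) * P"
    proof -
      have "L = (L powr \<gamma>) powr (1/\<gamma>)" using L1 g0 by (simp add: powr_powr)
      also have "\<dots> \<le> (2 * Q) powr (1/\<gamma>)" using Lle fbQ Lgp g0 by (intro powr_mono2) auto
      also have "\<dots> = 2 powr (1/\<gamma>) * P" using Q1 by (simp add: P powr_mult)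
      finally show ?thesis .
    qed
    have t1: "ln D / ln \<alpha> \<le> 2 powr (1/\<gamma>) * P * ll"
    proof -
      have "ln D / ln \<alpha> = x" using a by (simp add: x_def log_def)
      also have "x = L * ll" using llpos by (simp add: L_def)
      also have "\<dots> \<le> 2 powr (1/\<gamma>) * P * ll" using LP llpos by (intro mult_right_mono) auto
      finally show ?thesis .
    qed
    have QP: "Q \<le> P"
    proof -
      have "Q = Q powr 1" using Q1 by simp
      also have "\<dots> \<le> Q powr (1/\<gamma>)" using Q1 g0 g1 by (intro powr_mono) (auto simp: field_simps)
      finally show ?thesis using P by simp
    qed
    have t2: "real f * (\<alpha>/\<beta> + 1) \<le> 12 * P * ll"
    proof -
      have "real f * (\<alpha>/\<beta> + 1) = 2 * (real f / \<beta>) + real f" using a by (simp add: field_simps)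
      also have "\<dots> \<le> 6 * P" using fb fbQ QP by linarith
      also have "\<dots> \<le> 12 * P * ll" using ll2 QP Q1 by simp
      finally show ?thesis .
    qed
    have "ln D / ln \<alpha> + real f * (\<alpha>/\<beta> + 1) + 2 \<le> (2 powr (1/\<gamma>) + 12) * (P * ll) + 2 * L"
      using t1 t2 L1 by (simp add: algebra_simps)
    also have "\<dots> \<le> K * (P * ll) + K * L" using Kge Pll L1 by (intro add_mono mult_right_mono) auto
    also have "\<dots> = K * (L + P * ll)" by (simp add: algebra_simps)
    finally have "ln D / ln \<alpha> + real f * (\<alpha>/\<beta> + 1) + 2 \<le> K * (L + P * ll)" .
    then show ?thesis using a unfolding K_def by simp
  qed
qed


theorem mainTheorem9:
  fixes \<gamma> :: real
  assumes "0 < \<gamma>" "\<gamma> < 1"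
  shows "\<exists>K>0. \<forall>(V::'a set) E f (w::'a \<Rightarrow> real) \<epsilon>.
     hypergraph V E f \<longrightarrow> maxdeg V E \<ge> 3 \<longrightarrow> (\<forall>v\<in>V. w v \<ge> 0) \<longrightarrow>
     0 < \<epsilon> \<longrightarrow> \<epsilon> \<le> 1 \<longrightarrow>
     (let \<Delta> = maxdeg V E; \<beta> = \<epsilon> / (real f + \<epsilon>); \<alpha> = mw_alpha \<gamma> f \<beta> \<Delta>
      in \<exists>T. mw_terminated V (mw_state V E w \<beta> \<alpha> T) \<and>
             real T \<le> K * (log 2 \<Delta> / log 2 (log 2 \<Delta>)
                           + (real f ^ 2 / \<epsilon>) powr (1 / \<gamma>) * log 2 (log 2 \<Delta>)))"
proof (intro exI[of _ "10/(1-\<gamma>) + 18 + 2 powr (1/\<gamma>)"] conjI allI impI)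
  show "0 < 10/(1-\<gamma>) + 18 + 2 powr (1/\<gamma>)" using assms by (simp add: add_pos_nonneg)
next
  fix V :: "'a set" and E :: "'a set set" and f :: nat and w :: "'a \<Rightarrow> real" and \<epsilon> :: real
  assume hg: "hypergraph V E f" and dg: "maxdeg V E \<ge> 3" and wn: "\<forall>v\<in>V. w v \<ge> 0"
    and e0: "0 < \<epsilon>" and e1: "\<epsilon> \<le> 1"
  define D where "D = real (maxdeg V E)"
  define \<beta> where "\<beta> = \<epsilon> / (real f + \<epsilon>)"
  define \<alpha> where "\<alpha> = mw_alpha \<gamma> f \<beta> (maxdeg V E)"
  define K where "K = 10/(1-\<gamma>) + 18 + 2 powr (1/\<gamma>)"
  define R where "R = log 2 D / log 2 (log 2 D) + (real f ^ 2 / \<epsilon>) powr (1 / \<gamma>) * log 2 (log 2 D)"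
  have D3: "D \<ge> 3" using dg by (simp add: D_def)
  have ar: "1 < \<alpha> \<and> ln D / ln \<alpha> + real f * (\<alpha>/\<beta> + 1) + 2 \<le> K * R"
    using arith[OF assms D3 e0 e1, of f] unfolding \<alpha>_def mw_alpha_def Let_def D_def K_def R_def \<beta>_def
    by simp
  have b0: "0 < \<beta>" and b1: "\<beta> \<le> 1" using e0 by (auto simp: \<beta>_def)
  interpret mwc V E f w \<beta> \<alpha> using hg wn b0 b1 ar by unfold_locales auto
  define B where "B = ln D / ln \<alpha> + real f * (\<alpha>/\<beta> + 1)"
  have B0: "B \<ge> 0" using D3 ar b0 by (simp add: B_def)
  define m where "m = nat \<lceil>B\<rceil>"
  have m1: "real m \<ge> B" using B0 by (simp add: m_def)
  have m2: "real m \<le> B + 1" using B0 by (simp add: m_def)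
  have "mw_terminated V (s (Suc m))" by (rule terminates) (use m1 in \<open>simp add: B_def D_def\<close>)
  moreover have "real (Suc m) \<le> K * R" using m2 ar B_def by simp
  ultimately show "let \<Delta> = maxdeg V E; \<beta> = \<epsilon> / (real f + \<epsilon>); \<alpha> = mw_alpha \<gamma> f \<beta> \<Delta>
      in \<exists>T. mw_terminated V (mw_state V E w \<beta> \<alpha> T) \<and>
             real T \<le> (10/(1-\<gamma>) + 18 + 2 powr (1/\<gamma>)) * (log 2 \<Delta> / log 2 (log 2 \<Delta>)
                           + (real f ^ 2 / \<epsilon>) powr (1 / \<gamma>) * log 2 (log 2 \<Delta>))"
    unfolding Let_def \<alpha>_def[symmetric] \<beta>_def[symmetric] K_def[symmetric] D_def[symmetric] R_def[symmetric]
    by blast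
qed

end
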